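(* Let $k\ge 1$, $H>0$, $\beta>0$, $h>0$, and consider a hierarchical-leadership flock $[0,1,\dots,k]$ with leader sets $\mathcal{L}(i)\subseteq\{0,\dots,i-1\}$, $\mathcal{L}(i)\neq\varnothing$ for $i\ge 1$. Let $\tilde x_0[n],\dots,\tilde x_k[n]\in\mathbb{R}^3$ ($n=0,1,2,\dots$) be positions, and for $j\in\mathcal{L}(i)$ set \[a_{ij}[n]=\frac{H}{\left(1+|\tilde x_j[n]-\tilde x_i[n]|^2/2\right)^{\beta}},\] and $a_{ij}[n]=0$ for $j\notin\mathcal{L}(i)$. Let $d_i[n]=\sum_{j\in\mathcal{L}(i)}a_{ij}[n]$ for $i\ge 1$, and let $L_n$ be the $k\times k$ matrix (indices $1,\dots,k$) with $(L_n)_{ii}=d_i[n]$, $(L_n)_{ij}=-a_{ij}[n]$ for $1\le j<i$, and $(L_n)_{ij}=0$ for $j>i$. Let $S[n]=I-hL_n$. Suppose that there is a constant $B\ge 0$ such that the reduced position vector $x[n]=(\tilde x_1[n]-\tilde x_0[n],\dots,\tilde x_k[n]-\tilde x_0[n])\in\mathbb{R}^{3k}$ satisfies $|x[n]|^2\le B$ for all $n\ge 0$, and set $d_\ast=H/(1+B)^{\beta}$. If $0<h<\frac{1}{2kH}$, then for all $n\ge 0$ every entry of $S[n]$ is nonnegative and \[\max_{i,j}S_{ij}[n]\le 1-hd_\ast=:\rho_h.\]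
   Context: A flock is under hierarchical leadership (HL) if its agents can be labeled $0,1,\dots,k$ so that agent $i$ is influenced by agent $j$ (i.e. $a_{ij}>0$) only if $j<i$, and every agent $i>0$ has a nonempty leader set $\mathcal{L}(i)=\{j: a_{ij}>0\}$. *)

theory Defs
  imports "HOL-Analysis.Analysis"
begin

definition hl_flock :: "nat \<Rightarrow> (nat \<Rightarrow> nat set) \<Rightarrow> bool" where
  "hl_flock k L \<longleftrightarrow> L 0 = {} \<and> (\<forall>i\<in>{1..k}. L i \<subseteq> {0..<i} \<and> L i \<noteq> {})"

text \<open>Positions: xt n i is the position of agent i at time n.\<close>
definition weight :: "real \<Rightarrow> real \<Rightarrow> (nat \<Rightarrow> nat set) \<Rightarrow> (nat \<Rightarrow> nat \<Rightarrow> real^3)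
    \<Rightarrow> nat \<Rightarrow> nat \<Rightarrow> nat \<Rightarrow> real" where
  "weight H \<beta> L xt n i j =
     (if j \<in> L i then H / (1 + (norm (xt n j - xt n i))\<^sup>2 / 2) powr \<beta> else 0)"

definition degree :: "real \<Rightarrow> real \<Rightarrow> (nat \<Rightarrow> nat set) \<Rightarrow> (nat \<Rightarrow> nat \<Rightarrow> real^3)
    \<Rightarrow> nat \<Rightarrow> nat \<Rightarrow> real" where
  "degree H \<beta> L xt n i = (\<Sum>j\<in>L i. weight H \<beta> L xt n i j)"

text \<open>The k x k matrix L_n, indices 1..k (entries outside this range are irrelevant).\<close>
definition lap :: "real \<Rightarrow> real \<Rightarrow> (nat \<Rightarrow> nat set) \<Rightarrow> (nat \<Rightarrow> nat \<Rightarrow> real^3)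
    \<Rightarrow> nat \<Rightarrow> nat \<Rightarrow> nat \<Rightarrow> real" where
  "lap H \<beta> L xt n i j =
     (if i = j then degree H \<beta> L xt n i
      else if j < i then - weight H \<beta> L xt n i j else 0)"

definition Smat :: "real \<Rightarrow> real \<Rightarrow> real \<Rightarrow> (nat \<Rightarrow> nat set) \<Rightarrow> (nat \<Rightarrow> nat \<Rightarrow> real^3)
    \<Rightarrow> nat \<Rightarrow> nat \<Rightarrow> nat \<Rightarrow> real" where
  "Smat h H \<beta> L xt n i j = (if i = j then 1 else 0) - h * lap H \<beta> L xt n i j"

text \<open>Squared Euclidean norm of the reduced vector x[n] in R^(3k).\<close>
definition reduced_sqnorm :: "nat \<Rightarrow> (nat \<Rightarrow> nat \<Rightarrow> real^3) \<Rightarrow> nat \<Rightarrow> real" where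
  "reduced_sqnorm k xt n = (\<Sum>i\<in>{1..k}. (norm (xt n i - xt n 0))\<^sup>2)"

end

theory Submission
  imports Defs
begin

lemma weight_nonneg:
  assumes "H > 0" shows "weight H \<beta> L xt n i j \<ge> 0"
  using assms by (simp add: weight_def)

lemma weight_le:
  assumes "H > 0" "\<beta> > 0" shows "weight H \<beta> L xt n i j \<le> H"
proof -
  have "1 \<le> (1 + (norm (xt n j - xt n i))\<^sup>2 / 2) powr \<beta>"
    using assms by (intro ge_one_powr_ge_zero) auto
  then have "H / (1 + (norm (xt n j - xt n i))\<^sup>2 / 2) powr \<beta> \<le> H"
    using assms by (simp add: divide_le_eq)
  then show ?thesis using assms by (simp add: weight_def)
qed

lemma sq_tri:
  fixes a b c :: "real^3"
  shows "(norm (a - b))\<^sup>2 \<le> 2 * (norm (a - c))\<^sup>2 + 2 * (norm (b - c))\<^sup>2"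
proof -
  have "norm (a - b) \<le> norm (a - c) + norm (b - c)"
    using norm_triangle_ineq4[of "a - c" "b - c"] by simp
  then have "(norm (a - b))\<^sup>2 \<le> (norm (a - c) + norm (b - c))\<^sup>2"
    by (simp add: power_mono)
  also have "\<dots> \<le> 2 * (norm (a - c))\<^sup>2 + 2 * (norm (b - c))\<^sup>2"
    using sum_squares_bound[of "norm (a - c)" "norm (b - c)"]
    by (simp add: power2_eq_square algebra_simps)
  finally show ?thesis .
qed

theorem proposition2:
  fixes k :: nat and H \<beta> h B :: real
    and L :: "nat \<Rightarrow> nat set" and xt :: "nat \<Rightarrow> nat \<Rightarrow> real^3"
  assumes "k \<ge> 1" and "H > 0" and "\<beta> > 0" and "h > 0"
    and "hl_flock k L"
    and "B \<ge> 0" and "\<forall>n. reduced_sqnorm k xt n \<le> B"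
    and "h < 1 / (2 * real k * H)"
  shows "\<forall>n. (\<forall>i\<in>{1..k}. \<forall>j\<in>{1..k}. Smat h H \<beta> L xt n i j \<ge> 0)
            \<and> (\<forall>i\<in>{1..k}. \<forall>j\<in>{1..k}.
                 Smat h H \<beta> L xt n i j \<le> 1 - h * (H / (1 + B) powr \<beta>))"
proof (intro allI conjI ballI)
  fix n i j assume i: "i \<in> {1..k}" and j: "j \<in> {1..k}"
  have hkH: "h * real k * H < 1/2"
    using assms(1,2,4,8) by (simp add: field_simps)
  have hH: "h * H < 1/2"
  proof -
    have "h * H \<le> h * real k * H" using assms(1,2,4) by simp
    then show ?thesis using hkH by linarith
  qed
  have Li: "L i \<subseteq> {0..<i}" "L i \<noteq> {}" using assms(5) i by (auto simp: hl_flock_def)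
  have finL: "finite (L i)" using Li finite_subset by blast
  have cardL: "card (L i) \<le> k"
    using card_mono[OF _ Li(1)] i by auto
  have deg_le: "degree H \<beta> L xt n i \<le> real k * H"
  proof -
    have "degree H \<beta> L xt n i \<le> (\<Sum>j\<in>L i. H)"
      unfolding degree_def by (intro sum_mono weight_le assms(2,3))
    also have "\<dots> = real (card (L i)) * H" by simp
    also have "\<dots> \<le> real k * H" using cardL assms(2) by (simp add: mult_right_mono)
    finally show ?thesis .
  qed
  define ds where "ds = H / (1 + B) powr \<beta>"
  have ds_pos: "ds \<ge> 0" using assms(2,6) by (simp add: ds_def)
  have ds_le: "ds \<le> H"
  proof -
    have "1 \<le> (1 + B) powr \<beta>" using assms(3,6) by (intro ge_one_powr_ge_zero) auto
    then show ?thesis using assms(2) by (simp add: ds_def divide_le_eq)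
  qed
  have deg_ge: "degree H \<beta> L xt n i \<ge> ds"
  proof -
    obtain l where l: "l \<in> L i" using Li(2) by blast
    have bnd: "(norm (xt n l - xt n i))\<^sup>2 / 2 \<le> B"
    proof (cases "l = 0")
      case True
      have "(norm (xt n i - xt n 0))\<^sup>2 \<le> reduced_sqnorm k xt n"
        unfolding reduced_sqnorm_def using i
        by (intro member_le_sum) auto
      moreover have "reduced_sqnorm k xt n \<le> B" using assms(7) by blast
      ultimately show ?thesis using True assms(6)
        by (simp add: norm_minus_commute)
    next
      case False
      have lk: "l \<in> {1..k}" using l Li(1) False i by auto
      have il: "i \<noteq> l" using l Li(1) by auto
      have "(norm (xt n i - xt n 0))\<^sup>2 + (norm (xt n l - xt n 0))\<^sup>2
          = (\<Sum>m\<in>{i,l}. (norm (xt n m - xt n 0))\<^sup>2)" using il by simp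
      also have "\<dots> \<le> reduced_sqnorm k xt n"
        unfolding reduced_sqnorm_def using i lk
        by (intro sum_mono2) auto
      finally have "(norm (xt n i - xt n 0))\<^sup>2 + (norm (xt n l - xt n 0))\<^sup>2 \<le> B"
        using assms(7) by (meson order_trans)
      then show ?thesis using sq_tri[of "xt n l" "xt n i" "xt n 0"] by linarith
    qed
    have "(1 + (norm (xt n l - xt n i))\<^sup>2 / 2) powr \<beta> \<le> (1 + B) powr \<beta>"
      using bnd assms(3) by (intro powr_mono2) auto
    moreover have "(1 + (norm (xt n l - xt n i))\<^sup>2 / 2) powr \<beta> > 0"
    proof -
      have "0 < 1 + (norm (xt n l - xt n i))\<^sup>2 / 2"
        by (simp add: add_pos_nonneg)
      then show ?thesis by simp
    qed
    ultimately have "ds \<le> weight H \<beta> L xt n i l"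
      unfolding ds_def weight_def using l assms(2)
      by (simp add: frac_le)
    also have "\<dots> \<le> degree H \<beta> L xt n i"
      unfolding degree_def using finL l
      by (intro member_le_sum weight_nonneg assms(2)) auto
    finally show ?thesis .
  qed
  have deg_nn: "degree H \<beta> L xt n i \<ge> 0" using deg_ge ds_pos by linarith
  have hds: "h * ds \<le> h * H" using ds_le assms(4) by simp
  have "h * degree H \<beta> L xt n i \<le> h * (real k * H)"
    using deg_le assms(4) by (simp add: mult_left_mono)
  then have hdeg: "h * degree H \<beta> L xt n i < 1/2" using hkH by (simp add: mult.assoc)
  have hdeg2: "h * ds \<le> h * degree H \<beta> L xt n i" using deg_ge assms(4) by (simp add: mult_left_mono)
  have w0: "0 \<le> weight H \<beta> L xt n i j" by (rule weight_nonneg[OF assms(2)])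
  have w1: "h * weight H \<beta> L xt n i j \<le> h * H"
    using weight_le[OF assms(2,3)] assms(4) by (simp add: mult_left_mono)
  have hw: "0 \<le> h * weight H \<beta> L xt n i j" using w0 assms(4) by simp
  show "Smat h H \<beta> L xt n i j \<ge> 0"
    unfolding Smat_def lap_def using hdeg hw by auto
  show "Smat h H \<beta> L xt n i j \<le> 1 - h * (H / (1 + B) powr \<beta>)"
    unfolding Smat_def lap_def ds_def[symmetric] using hdeg2 hds hH w1 hw by auto
qed

end
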